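(* Let $\delta\in\mathcal D^0$ and let $C$ be an absolutely continuous copula with multidiagonal $\delta$ and density $c$. Then for a.e. $u\in I^d$, for every $2\le i\le d$ and every $s\in I\setminus\Psi_i^\delta$, $c(u)\mathbf 1_{\{u_{(i-1)}<s<u_{(i)}\}}=0$. Equivalently, $c=0$ a.e. on $I^d\setminus L_\delta$.
   Context: $I=[0,1]$; $u_{(1)}\le\dots\le u_{(d)}$ are the ordered coordinates of $u$. A copula is a cdf on $\mathbb R^d$ with uniform-on-$I$ coordinates. For a copula $C$ and $U\sim C$ with order statistics $U_{(i)}$, the multidiagonal is $(\delta_{(i)})$ with $\delta_{(i)}(t)=\mathbb P(U_{(i)}\le t)$. $\mathcal D^0$ is the set of multidiagonals of absolutely continuous copulas. For $2\le i\le d$, $\Psi_i^\delta=\{s\in(0,1):\delta_{(i-1)}(s)>\delta_{(i)}(s)\}$, and $L_\delta=\{u\in I^d:(u_{(i-1)},u_{(i)})\subset\Psi_i^\delta\text{ for all }2\le i\le d\}$. *)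

theory Defs
  imports "HOL-Probability.Probability"
begin

text \<open>Points of \<real>^d are vectors indexed by a finite type 'd, with d = CARD('d).
  Order statistics are 1-based: ord_stat u 1 \<le> ... \<le> ord_stat u d.\<close>

definition ord_stat :: "real^'d \<Rightarrow> nat \<Rightarrow> real" where
  "ord_stat u i = sorted_list_of_multiset (image_mset (\<lambda>j. u $ j) (mset_set UNIV)) ! (i - 1)"

text \<open>A copula, viewed as the law of a random vector U with uniform-on-[0,1] marginals
  (the copula C itself is its cdf, see copula_cdf).\<close>

definition copula_measure :: "(real^'d) measure \<Rightarrow> bool" where
  "copula_measure \<mu> \<longleftrightarrow> prob_space \<mu> \<and> sets \<mu> = sets borel \<and>
     (\<forall>j. distr \<mu> borel (\<lambda>x. x $ j) = uniform_measure lborel {0..1})"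

definition copula_cdf :: "(real^'d) measure \<Rightarrow> real^'d \<Rightarrow> real" where
  "copula_cdf \<mu> u = measure \<mu> {x. \<forall>j. x $ j \<le> u $ j}"

definition multidiag :: "(real^'d) measure \<Rightarrow> nat \<Rightarrow> real \<Rightarrow> real" where
  "multidiag \<mu> i t = measure \<mu> {x. ord_stat x i \<le> t}"

definition Psi :: "(real^'d) measure \<Rightarrow> nat \<Rightarrow> real set" where
  "Psi \<mu> i = {s. 0 < s \<and> s < 1 \<and> multidiag \<mu> (i - 1) s > multidiag \<mu> i s}"

definition unit_cube :: "(real^'d) set" where
  "unit_cube = {u. \<forall>j. 0 \<le> u $ j \<and> u $ j \<le> 1}"

end

theory Submission imports Defs begin

lemma sorted_nth_le_iff:
  fixes L :: "real list"
  assumes "sorted L" "1 \<le> i" "i \<le> length L"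
  shows "L ! (i - 1) \<le> s \<longleftrightarrow> i \<le> length (filter (\<lambda>v. v \<le> s) L)"
proof -
  have len: "length (filter (\<lambda>v. v \<le> s) L) = card {k. k < length L \<and> L ! k \<le> s}"
    by (simp add: length_filter_conv_card)
  show ?thesis
  proof
    assume h: "L ! (i - 1) \<le> s"
    have "{0..<i} \<subseteq> {k. k < length L \<and> L ! k \<le> s}"
    proof
      fix k assume "k \<in> {0..<i}"
      hence "k \<le> i - 1" "k < length L" using assms by auto
      hence "L ! k \<le> L ! (i - 1)" using assms by (intro sorted_nth_mono) auto
      thus "k \<in> {k. k < length L \<and> L ! k \<le> s}" using h \<open>k < length L\<close> by auto
    qed
    hence "card {0..<i} \<le> card {k. k < length L \<and> L ! k \<le> s}"
      by (intro card_mono) auto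
    thus "i \<le> length (filter (\<lambda>v. v \<le> s) L)" using len by simp
  next
    assume h: "i \<le> length (filter (\<lambda>v. v \<le> s) L)"
    show "L ! (i - 1) \<le> s"
    proof (rule ccontr)
      assume n: "\<not> L ! (i - 1) \<le> s"
      have "{k. k < length L \<and> L ! k \<le> s} \<subseteq> {0..<i-1}"
      proof
        fix k assume k: "k \<in> {k. k < length L \<and> L ! k \<le> s}"
        show "k \<in> {0..<i-1}"
        proof (rule ccontr)
          assume "k \<notin> {0..<i-1}"
          hence "i - 1 \<le> k" by auto
          hence "L ! (i - 1) \<le> L ! k" using k assms by (intro sorted_nth_mono) auto
          thus False using n k by auto
        qed
      qed
      hence "card {k. k < length L \<and> L ! k \<le> s} \<le> card {0..<i-1}"
        by (intro card_mono) auto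
      thus False using h len assms by simp
    qed
  qed
qed

lemma ord_stat_le_iff:
  fixes x :: "real^'d"
  assumes "1 \<le> i" "i \<le> CARD('d)"
  shows "ord_stat x i \<le> s \<longleftrightarrow> i \<le> card {j. x $ j \<le> s}"
proof -
  define M where "M = image_mset (\<lambda>j. x $ j) (mset_set (UNIV :: 'd set))"
  define L where "L = sorted_list_of_multiset M"
  have "sorted L" unfolding L_def by simp
  have lenL: "length L = CARD('d)"
    unfolding L_def M_def by (metis size_mset mset_sorted_list_of_multiset size_image_mset size_mset_set)
  have "length (filter (\<lambda>v. v \<le> s) L) = size (filter_mset (\<lambda>v. v \<le> s) M)"
    unfolding L_def by (metis mset_filter mset_sorted_list_of_multiset size_mset)
  also have "\<dots> = card {j. x $ j \<le> s}"
    unfolding M_def by (simp add: filter_mset_image_mset)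
  finally have "length (filter (\<lambda>v. v \<le> s) L) = card {j. x $ j \<le> s}" .
  moreover have "ord_stat x i = L ! (i - 1)" unfolding ord_stat_def L_def M_def by simp
  ultimately show ?thesis using sorted_nth_le_iff[OF \<open>sorted L\<close> assms(1)] assms lenL by simp
qed

lemma ord_stat_sets:
  assumes "1 \<le> i" "i \<le> CARD('d)"
  shows "{x :: real^'d. ord_stat x i \<le> s} \<in> sets borel"
proof -
  have m: "(\<lambda>x::real^'d. (\<Sum>j\<in>UNIV. if x $ j \<le> s then 1 else 0 :: real)) \<in> borel_measurable borel"
    by measurable
  have "{x :: real^'d. ord_stat x i \<le> s} = {x. real i \<le> (\<Sum>j\<in>UNIV. if x $ j \<le> s then 1 else 0 :: real)}"
    using assms by (auto simp: ord_stat_le_iff sum.If_cases)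
  also have "\<dots> \<in> sets borel" using m by measurable
  finally show ?thesis .
qed

lemma null_set_c:
  fixes \<mu> :: "(real^'d) measure" and c :: "real^'d \<Rightarrow> real"
  assumes cop: "copula_measure \<mu>"
    and cm: "c \<in> borel_measurable borel"
    and nn: "\<And>x. 0 \<le> c x"
    and mu: "\<mu> = density lborel (\<lambda>x. ennreal (c x))"
    and i: "2 \<le> i" "i \<le> CARD('d)"
    and le: "multidiag \<mu> (i - 1) s \<le> multidiag \<mu> i s"
  shows "AE u in lborel. ord_stat u (i - 1) \<le> s \<and> \<not> ord_stat u i \<le> s \<longrightarrow> c u = 0"
proof -
  define A where "A = {x :: real^'d. ord_stat x (i - 1) \<le> s}"
  define B where "B = {x :: real^'d. ord_stat x i \<le> s}"
  have ps: "prob_space \<mu>" using cop unfolding copula_measure_def by auto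
  then interpret prob_space \<mu> .
  have sA: "A \<in> sets \<mu>" unfolding A_def mu using i by (simp add: ord_stat_sets)
  have sB: "B \<in> sets \<mu>" unfolding B_def mu using i by (simp add: ord_stat_sets)
  have BA: "B \<subseteq> A" unfolding A_def B_def using i
    by (auto simp: ord_stat_le_iff)
  have "measure \<mu> (A - B) = measure \<mu> A - measure \<mu> B"
    using sA sB BA by (simp add: finite_measure_Diff)
  also have "\<dots> \<le> 0" using le unfolding multidiag_def A_def B_def by simp
  finally have "measure \<mu> (A - B) = 0" by (simp add: antisym)
  hence "emeasure \<mu> (A - B) = 0" using sA sB by (simp add: emeasure_eq_measure)
  hence "(\<integral>\<^sup>+ x. ennreal (c x) * indicator (A - B) x \<partial>lborel) = 0"
    using sA sB cm unfolding mu by (simp add: emeasure_density)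
  hence "AE x in lborel. ennreal (c x) * indicator (A - B) x = 0"
    using sA sB cm unfolding mu by (subst nn_integral_0_iff_AE[symmetric]) auto
  thus ?thesis
    by eventually_elim (auto simp: A_def B_def indicator_def nn)
qed

theorem mainTheorem17:
  fixes \<mu> :: "(real^'d) measure" and c :: "real^'d \<Rightarrow> real"
  assumes "copula_measure \<mu>"
    and "c \<in> borel_measurable borel"
    and "\<And>x. 0 \<le> c x"
    and "\<mu> = density lborel (\<lambda>x. ennreal (c x))"
  shows "AE u in lborel. u \<in> unit_cube \<longrightarrow>
           (\<forall>i\<in>{2..CARD('d)}. \<forall>s\<in>{0..1} - Psi \<mu> i.
              c u * indicator {x. ord_stat x (i - 1) < s \<and> s < ord_stat x i} u = 0)"
proof -
  define N where "N i = {s. 0 < s \<and> s < 1 \<and> s \<notin> Psi \<mu> i}" for i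
  define pk where "pk i p q = (SOME s. s \<in> N i \<and> p < s \<and> s < q)" for i and p q :: real
  have "\<forall>(i::nat) (p::rat) (q::rat). AE u in lborel.
      (2 \<le> i \<and> i \<le> CARD('d) \<and> (\<exists>s\<in>N i. of_rat p < s \<and> s < of_rat q)) \<longrightarrow>
      ord_stat u (i - 1) \<le> pk i (of_rat p) (of_rat q) \<and> \<not> ord_stat u i \<le> pk i (of_rat p) (of_rat q) \<longrightarrow> c u = 0"
  proof (intro allI)
    fix i :: nat and p q :: rat
    show "AE u in lborel.
      (2 \<le> i \<and> i \<le> CARD('d) \<and> (\<exists>s\<in>N i. of_rat p < s \<and> s < of_rat q)) \<longrightarrow>
      ord_stat u (i - 1) \<le> pk i (of_rat p) (of_rat q) \<and> \<not> ord_stat u i \<le> pk i (of_rat p) (of_rat q) \<longrightarrow> c u = 0"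
    proof (cases "2 \<le> i \<and> i \<le> CARD('d) \<and> (\<exists>s\<in>N i. of_rat p < s \<and> s < of_rat q)")
      case True
      hence "pk i (of_rat p) (of_rat q) \<in> N i" unfolding pk_def by (metis (mono_tags, lifting) someI_ex)
      hence "multidiag \<mu> (i - 1) (pk i (of_rat p) (of_rat q)) \<le> multidiag \<mu> i (pk i (of_rat p) (of_rat q))"
        unfolding N_def Psi_def by auto
      from null_set_c[OF assms(1,2,3,4) _ _ this] True show ?thesis by simp
    next
      case False thus ?thesis by (intro AE_I2) blast
    qed
  qed
  hence "AE u in lborel. \<forall>(i::nat) (p::rat) (q::rat).
      (2 \<le> i \<and> i \<le> CARD('d) \<and> (\<exists>s\<in>N i. of_rat p < s \<and> s < of_rat q)) \<longrightarrow>
      ord_stat u (i - 1) \<le> pk i (of_rat p) (of_rat q) \<and> \<not> ord_stat u i \<le> pk i (of_rat p) (of_rat q) \<longrightarrow> c u = 0"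
    by (simp add: AE_all_countable)
  then show ?thesis
  proof eventually_elim
    case (elim u)
    show ?case
    proof (intro impI ballI)
      assume cube: "u \<in> unit_cube"
      fix i s assume i: "i \<in> {2..CARD('d)}" and s: "s \<in> {0..1} - Psi \<mu> i"
      show "c u * indicator {x. ord_stat x (i - 1) < s \<and> s < ord_stat x i} u = 0"
      proof (cases "ord_stat u (i - 1) < s \<and> s < ord_stat u i")
        case False thus ?thesis by simp
      next
        case True
        have s0: "s \<noteq> 0"
        proof
          assume "s = 0"
          have "ord_stat u (i - 1) \<le> ord_stat u (i - 1)" by simp
          hence "i - 1 \<le> card {j. u $ j \<le> ord_stat u (i - 1)}"
            using i by (subst ord_stat_le_iff[symmetric]) auto
          hence "{j. u $ j \<le> ord_stat u (i - 1)} \<noteq> {}" using i by (intro notI) simp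
          then obtain j where "u $ j \<le> ord_stat u (i - 1)" by auto
          moreover have "0 \<le> u $ j" using cube unfolding unit_cube_def by auto
          ultimately show False using True \<open>s = 0\<close> by linarith
        qed
        have s1: "s \<noteq> 1"
        proof
          assume "s = 1"
          have "{j. u $ j \<le> 1} = UNIV" using cube unfolding unit_cube_def by auto
          hence "ord_stat u i \<le> 1" using i by (subst ord_stat_le_iff) auto
          thus False using True \<open>s = 1\<close> by simp
        qed
        have sN: "s \<in> N i" using s s0 s1 unfolding N_def by auto
        obtain p where p: "p \<in> \<rat>" "ord_stat u (i - 1) < p" "p < s"
          using True Rats_dense_in_real by blast
        obtain q where q: "q \<in> \<rat>" "s < q" "q < ord_stat u i"
          using True Rats_dense_in_real by blast
        obtain p' where p': "p = of_rat p'" using p(1) Rats_cases by blast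
        obtain q' where q': "q = of_rat q'" using q(1) Rats_cases by blast
        have ex: "\<exists>s\<in>N i. of_rat p' < s \<and> s < of_rat q'" using sN p q p' q' by auto
        hence "pk i p q \<in> N i \<and> p < pk i p q \<and> pk i p q < q"
          unfolding pk_def p' q' by (metis (mono_tags, lifting) someI_ex)
        hence "ord_stat u (i - 1) \<le> pk i p q \<and> \<not> ord_stat u i \<le> pk i p q"
          using p q by auto
        hence "c u = 0" using elim[rule_format, of i p' q'] i ex p' q' by auto
        thus ?thesis by simp
      qed
    qed
  qed
qed

end
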